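(* Let $B,B^*,C,C_2>0$ and $q_1\in\mathbb{R}$ be constants, and let $\{\rho'_L\}_{L\in\mathbb{R}_+}$ be positive numbers with $\lim_{L\to\infty}\rho'_L=0$ and $\lim_{L\to\infty}\rho'_L\sqrt L=\infty$. For $L>1$ define $p_{0,L}=1-\frac1L$, $Z_{0,L}=\ln\frac{p_{0,L}}{1-p_{0,L}}$, $A_L=Z_{0,L}/2$, $$\varepsilon_L=\exp\Big\{\frac{B}{p_{0,L}}\Big[-\frac{L\rho'_L}{C}+\Big(\frac1C-\frac{p_{0,L}}{B}+\frac{3(1-p_{0,L})}{2B^*}\Big)Z_{0,L}+q_1\Big]\Big\},$$ and let $p_{1,L}\in\Big[0,\frac{e^{-Z_{0,L}}-\varepsilon_Le^{-C_2}}{e^{-A_L}-\varepsilon_Le^{-C_2}}\Big]$. Let $\{W_L\}$ be random variables whose expectations satisfy $$p_{0,L}(1-p_{1,L})\mathbb{E}(W_L)=-\frac{p_{0,L}\ln\varepsilon_L}{B}+\frac{\ln(\exp(L(C-\rho'_L))-1)}{C}+\Big[\frac1C-\frac{p_{0,L}}{B}+\frac{1-p_{0,L}}{B^*}\Big]Z_{0,L}+\frac{(1-p_{0,L})|A_L|}{B^*}+q_1.$$ Then $\liminf_{L\to\infty}-\frac{\ln\varepsilon_L}{L\rho'_L}\ge\frac BC$, and $\mathbb{E}(W_L)\le L+3\sqrt L$ for all sufficiently large $L$. *)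

theory Defs
  imports "HOL-Probability.Probability"
begin

definition p0 :: "real \<Rightarrow> real" where
  "p0 L = 1 - 1 / L"

definition Z0 :: "real \<Rightarrow> real" where
  "Z0 L = ln (p0 L / (1 - p0 L))"

definition AL :: "real \<Rightarrow> real" where
  "AL L = Z0 L / 2"

definition epsL :: "real \<Rightarrow> real \<Rightarrow> real \<Rightarrow> real \<Rightarrow> (real \<Rightarrow> real) \<Rightarrow> real \<Rightarrow> real" where
  "epsL B Bs C q1 \<rho> L =
     exp ((B / p0 L) * (- (L * \<rho> L) / C
        + (1 / C - p0 L / B + 3 * (1 - p0 L) / (2 * Bs)) * Z0 L + q1))"

end

theory Submission
  imports Defs "HOL-Real_Asymp.Real_Asymp"
begin

theorem lemma4:
  fixes B Bs C C2 q1 :: real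
    and \<rho> :: "real \<Rightarrow> real"
    and p1 :: "real \<Rightarrow> real"
    and M :: "real \<Rightarrow> 'a measure"
    and W :: "real \<Rightarrow> 'a \<Rightarrow> real"
  assumes "B > 0" "Bs > 0" "C > 0" "C2 > 0"
    and rho_pos: "\<And>L. L > 0 \<Longrightarrow> \<rho> L > 0"
    and rho_lim: "(\<rho> \<longlongrightarrow> 0) at_top"
    and rho_sqrt: "filterlim (\<lambda>L. \<rho> L * sqrt L) at_top at_top"
    and p1_range: "\<And>L. L > 1 \<Longrightarrow> 0 \<le> p1 L \<and>
        p1 L \<le> (exp (- Z0 L) - epsL B Bs C q1 \<rho> L * exp (- C2)) /
                 (exp (- AL L) - epsL B Bs C q1 \<rho> L * exp (- C2))"
    and W_rv: "\<And>L. L > 1 \<Longrightarrow> prob_space (M L) \<and> W L \<in> borel_measurable (M L)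
                                 \<and> integrable (M L) (W L)"
    and W_exp: "\<And>L. L > 1 \<Longrightarrow>
        p0 L * (1 - p1 L) * (\<integral>\<omega>. W L \<omega> \<partial>M L) =
          - p0 L * ln (epsL B Bs C q1 \<rho> L) / B
          + ln (exp (L * (C - \<rho> L)) - 1) / C
          + (1 / C - p0 L / B + (1 - p0 L) / Bs) * Z0 L
          + (1 - p0 L) * \<bar>AL L\<bar> / Bs + q1"
  shows "Liminf at_top (\<lambda>L. ereal (- ln (epsL B Bs C q1 \<rho> L) / (L * \<rho> L))) \<ge> ereal (B / C)
         \<and> (\<forall>\<^sub>F L in at_top. (\<integral>\<omega>. W L \<omega> \<partial>M L) \<le> L + 3 * sqrt L)"
proof -
  note Bp = \<open>B > 0\<close> and Bsp = \<open>Bs > 0\<close> and Cp = \<open>C > 0\<close> and C2p = \<open>C2 > 0\<close>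
  define eps where "eps = epsL B Bs C q1 \<rho>"
  define K where "K = (\<lambda>L. 1 / C - p0 L / B + 3 * (1 - p0 L) / (2 * Bs))"
  define r where "r = (\<lambda>L. \<rho> L * sqrt L)"
  define h where "h = (\<lambda>L. - ln (eps L) / (L * \<rho> L))"
  have p0eq: "\<And>L. L > 1 \<Longrightarrow> 1 - p0 L = 1 / L" by (simp add: p0_def)
  have p0pos: "\<And>L. L > 1 \<Longrightarrow> p0 L > 0" by (simp add: p0_def)
  have Z0eq: "\<And>L. L > 1 \<Longrightarrow> Z0 L = ln (L - 1)"
  proof -
    fix L :: real assume L: "L > 1"
    have "p0 L / (1 - p0 L) = L - 1" using L by (simp add: p0_def field_simps)
    thus "Z0 L = ln (L - 1)" by (simp add: Z0_def)
  qed
  have lneps: "\<And>L. ln (eps L) = (B / p0 L) * (- (L * \<rho> L) / C + K L * Z0 L + q1)"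
    by (simp add: eps_def epsL_def K_def)
  have heq: "\<And>L. L > 1 \<Longrightarrow> h L = (B / p0 L) * (1 / C - K L * (ln (L - 1) / sqrt L) * inverse (r L)
        - q1 * (1 / sqrt L) * inverse (r L))"
  proof -
    fix L :: real assume L: "L > 1"
    have sq: "sqrt L * sqrt L = L" using L by simp
    have sp: "sqrt L > 0" using L by simp
    have rp: "\<rho> L > 0" using L rho_pos by simp
    have pp: "p0 L > 0" using p0pos L by simp
    define s where "s = sqrt L"
    have sq': "L * \<rho> L = s * s * \<rho> L" using sq unfolding s_def by simp
    have "h L = - ((B / p0 L) * (- (s * s * \<rho> L) / C + K L * ln (L - 1) + q1)) / (s * s * \<rho> L)"
      unfolding h_def lneps Z0eq[OF L] sq' ..
    also have "\<dots> = (B / p0 L) * (1 / C - K L * (ln (L - 1) / s) * inverse (\<rho> L * s)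
        - q1 * (1 / s) * inverse (\<rho> L * s))"
      using sp rp pp Cp unfolding s_def[symmetric] by (simp add: field_simps)
    also have "\<dots> = (B / p0 L) * (1 / C - K L * (ln (L - 1) / sqrt L) * inverse (r L)
        - q1 * (1 / sqrt L) * inverse (r L))" unfolding r_def s_def ..
    finally show "h L = \<dots>" .
  qed
  have p0lim: "(p0 \<longlongrightarrow> 1) at_top" unfolding p0_def by real_asymp
  have Klim: "(K \<longlongrightarrow> 1 / C - 1 / B + 3 * (1 - 1) / (2 * Bs)) at_top"
    unfolding K_def using Bp Bsp by (intro tendsto_intros p0lim) auto
  have l1: "((\<lambda>L::real. ln(L-1)/sqrt L) \<longlongrightarrow> 0) at_top" by real_asymp
  have l2: "((\<lambda>L::real. 1/sqrt L) \<longlongrightarrow> 0) at_top" by real_asymp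
  have l3: "((\<lambda>L. inverse (r L)) \<longlongrightarrow> 0) at_top"
    using rho_sqrt unfolding r_def by (rule tendsto_inverse_0_at_top)
  have "((\<lambda>L. (B / p0 L) * (1 / C - K L * (ln (L - 1) / sqrt L) * inverse (r L)
        - q1 * (1 / sqrt L) * inverse (r L))) \<longlongrightarrow>
        (B / 1) * (1 / C - (1 / C - 1 / B + 3 * (1 - 1) / (2 * Bs)) * 0 * 0 - q1 * 0 * 0)) at_top"
    by (intro tendsto_intros p0lim Klim l1 l2 l3) auto
  hence "((\<lambda>L. (B / p0 L) * (1 / C - K L * (ln (L - 1) / sqrt L) * inverse (r L)
        - q1 * (1 / sqrt L) * inverse (r L))) \<longlongrightarrow> B / C) at_top" by simp
  hence hlim: "(h \<longlongrightarrow> B / C) at_top"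
    by (rule Lim_transform_eventually)
       (rule eventually_mono[OF eventually_gt_at_top[of 1]], simp only: heq)
  have part1: "Liminf at_top (\<lambda>L. ereal (- ln (epsL B Bs C q1 \<rho> L) / (L * \<rho> L))) \<ge> ereal (B / C)"
  proof -
    have "((\<lambda>L. ereal (h L)) \<longlongrightarrow> ereal (B / C)) at_top" using hlim by (simp add: tendsto_ereal)
    hence "Liminf at_top (\<lambda>L. ereal (h L)) = ereal (B / C)" by (simp add: lim_imp_Liminf)
    thus ?thesis by (simp add: h_def eps_def)
  qed
  have e1: "\<forall>\<^sub>F L in at_top. (L::real) > 2" by (rule eventually_gt_at_top)
  have e2: "\<forall>\<^sub>F L in at_top. \<rho> L < C" using order_tendstoD(2)[OF rho_lim Cp] .
  have e3: "\<forall>\<^sub>F L in at_top. 1 \<le> r L" using rho_sqrt unfolding filterlim_at_top r_def by blast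
  have e4: "\<forall>\<^sub>F L in at_top. B / (2 * C) < h L"
  proof (rule order_tendstoD(1)[OF hlim])
    show "B / (2 * C) < B / C" using Bp Cp by (simp add: field_simps)
  qed
  have e5: "\<forall>\<^sub>F L in at_top. ln (L - 1) / sqrt L < B / C"
    using order_tendstoD(2)[OF l1] Bp Cp by simp
  have e6: "eventually (\<lambda>L::real. 1 \<le> (1-1/L)*(1-1/sqrt(L-1))*(1+3/sqrt L)) at_top" by real_asymp
  have part2: "\<forall>\<^sub>F L in at_top. (\<integral>\<omega>. W L \<omega> \<partial>M L) \<le> L + 3 * sqrt L"
    using e1 e2 e3 e4 e5 e6
  proof eventually_elim
    case (elim L)
    have L1: "L > 1" using elim by simp
    have sp: "sqrt L > 0" using L1 by simp
    have sq: "sqrt L * sqrt L = L" using L1 by simp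
    have rp: "\<rho> L > 0" using L1 rho_pos by simp
    have Z0: "Z0 L = ln (L - 1)" using Z0eq L1 by simp
    have Z0nn: "Z0 L \<ge> 0" using Z0 elim by simp
    define E where "E = (\<integral>\<omega>. W L \<omega> \<partial>M L)"
    define b where "b = exp (- AL L)"
    have bpos: "b > 0" by (simp add: b_def)
    have ble1: "b \<le> 1" using Z0nn by (simp add: b_def AL_def)
    have b2: "b * b = exp (- Z0 L)" by (simp add: b_def AL_def flip: exp_add)
    have bsq: "b = 1 / sqrt (L - 1)"
    proof -
      have "exp (AL L) ^ 2 = L - 1" using Z0 elim
        by (simp add: AL_def power2_eq_square flip: exp_add)
      hence "sqrt (L - 1) = exp (AL L)" by (intro real_sqrt_unique) auto
      thus ?thesis by (simp add: b_def exp_minus divide_inverse)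
    qed
    have Lrho: "L * \<rho> L = sqrt L * r L" unfolding r_def using sq by (simp add: algebra_simps)
    have "ln (eps L) = - (h L * (L * \<rho> L))" unfolding h_def using L1 rp by simp
    also have "\<dots> \<le> - (B / (2 * C) * (L * \<rho> L))"
      using elim rp L1 by (intro le_imp_neg_le mult_right_mono) auto
    also have "\<dots> \<le> - (B / (2 * C) * sqrt L)"
    proof -
      have "sqrt L \<le> L * \<rho> L" unfolding Lrho using elim sp by simp
      thus ?thesis using Bp Cp by (intro le_imp_neg_le mult_left_mono) auto
    qed
    also have "\<dots> < - AL L"
    proof -
      have "ln (L - 1) < B / C * sqrt L" using elim sp by (simp add: divide_less_eq)
      thus ?thesis using Z0 by (simp add: AL_def)
    qed
    finally have lnb: "ln (eps L) < - AL L" .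
    have epos: "eps L > 0" by (simp add: eps_def epsL_def)
    have eb: "eps L < b" using lnb epos unfolding b_def
      by (metis exp_less_cancel_iff exp_ln)
    define x where "x = eps L * exp (- C2)"
    have xpos: "x > 0" using epos by (simp add: x_def)
    have xle: "x \<le> eps L" using epos C2p by (simp add: x_def mult_le_cancel_left1)
    have xb: "x < b" using xle eb by simp
    have p1b: "p1 L \<le> b"
    proof -
      have "p1 L \<le> (b * b - x) / (b - x)" using p1_range[OF L1] b2
        by (simp add: x_def eps_def b_def)
      also have "\<dots> \<le> b"
      proof -
        have "b * x \<le> 1 * x" using ble1 xpos by (intro mult_right_mono) auto
        thus ?thesis using xb by (simp add: divide_le_eq algebra_simps)
      qed
      finally show ?thesis .
    qed
    have p1nn: "p1 L \<ge> 0" using p1_range[OF L1] by simp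
    define d where "d = p0 L * (1 - p1 L)"
    have s1: "sqrt (L - 1) \<ge> 1" using elim by simp
    have "d \<ge> (1 - 1 / L) * (1 - 1 / sqrt (L - 1))"
      unfolding d_def p0_def using p1b bsq L1 by (intro mult_left_mono) auto
    hence dge: "d * (1 + 3 / sqrt L) \<ge> 1"
      using elim sp by (smt (verit) mult_right_mono divide_nonneg_pos)
    have dpos: "d > 0" using dge sp
      by (smt (verit) divide_pos_pos mult_nonpos_nonneg)
    have Abs: "\<bar>AL L\<bar> = Z0 L / 2" using Z0nn by (simp add: AL_def)
    have pe: "- p0 L * ln (eps L) / B = L * \<rho> L / C - K L * Z0 L - q1"
      using lneps[of L] p0pos[OF L1] Bp by (simp add: field_simps)
    have ex: "exp (L * (C - \<rho> L)) - 1 > 0" using elim L1 by simp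
    have lnle: "ln (exp (L * (C - \<rho> L)) - 1) \<le> L * (C - \<rho> L)"
    proof -
      have "ln (exp (L * (C - \<rho> L)) - 1) \<le> ln (exp (L * (C - \<rho> L)))"
        using ex by (subst ln_le_cancel_iff) auto
      thus ?thesis by simp
    qed
    have "d * E = L * \<rho> L / C - K L * Z0 L - q1
          + ln (exp (L * (C - \<rho> L)) - 1) / C
          + (1 / C - p0 L / B + (1 - p0 L) / Bs) * Z0 L
          + (1 - p0 L) * (Z0 L / 2) / Bs + q1"
      using W_exp[OF L1] unfolding d_def E_def pe[symmetric] Abs eps_def by simp
    also have "\<dots> = L * \<rho> L / C + ln (exp (L * (C - \<rho> L)) - 1) / C"
      unfolding K_def p0eq[OF L1] by (simp add: field_simps)
    also have "\<dots> \<le> L * \<rho> L / C + L * (C - \<rho> L) / C"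
      using lnle Cp by (simp add: divide_right_mono)
    also have "\<dots> = L" using Cp by (simp add: field_simps)
    finally have dE: "d * E \<le> L" .
    have "E \<le> L / d" using dE dpos by (simp add: le_divide_eq mult.commute)
    also have "\<dots> \<le> L * (1 + 3 / sqrt L)"
    proof -
      have "L * 1 \<le> L * (d * (1 + 3 / sqrt L))" using dge L1 by (intro mult_left_mono) auto
      thus ?thesis using dpos by (simp add: divide_le_eq mult.commute mult.left_commute)
    qed
    also have "\<dots> = L + 3 * sqrt L" using sp sq by (simp add: field_simps)
    finally show ?case unfolding E_def .
  qed
  show ?thesis using part1 part2 by simp
qed

end
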